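(* Let $p,q\in\mathbb{C}$, let $K\in\mathbb{C}^{N\times N}$ be a constant matrix and $c=(c_1,\dots,c_N)$ a constant row vector. Let $r(n,m)=(\rho_1(n,m),\dots,\rho_N(n,m))^T$ and $M(n,m)\in\mathbb{C}^{N\times N}$ be functions on $\mathbb{Z}^2$ such that, for all $(n,m)$, $$(pI-K)\tilde r=(pI+K)r,\qquad (qI-K)\hat r=(qI+K)r,\qquad MK+KM=r\,c,$$ and $I+M(n,m)$ is invertible for all $(n,m)$. Let $a,b\in\mathbb{C}$, and assume $sI\pm K$ is invertible for $s\in\{0,p,q,a,b\}$ and the eigenvalues $k_1,\dots,k_N$ of $K$ (with multiplicity) satisfy $k_i+k_j\ne0$ for all $i,j$. For $i,j\in\mathbb{Z}$ define $S^{(i,j)}=c\,K^j(I+M)^{-1}K^i r$. Then for all $i,j\in\mathbb{Z}$: $$p\tilde S^{(i,j)}-\tilde S^{(i,j+1)}=pS^{(i,j)}+S^{(i+1,j)}-\tilde S^{(i,0)}S^{(0,j)},$$ $$pS^{(i,j)}+S^{(i,j+1)}=p\tilde S^{(i,j)}-\tilde S^{(i+1,j)}+S^{(i,0)}\tilde S^{(0,j)},$$ $$q\hat S^{(i,j)}-\hat S^{(i,j+1)}=qS^{(i,j)}+S^{(i+1,j)}-\hat S^{(i,0)}S^{(0,j)},$$ $$qS^{(i,j)}+S^{(i,j+1)}=q\hat S^{(i,j)}-\hat S^{(i+1,j)}+S^{(i,0)}\hat S^{(0,j)}.$$ Moreover, define $S(a,b)=c\,(bI+K)^{-1}(I+M)^{-1}(aI+K)^{-1}r$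 and $V(a)=1-c\,(I+M)^{-1}(aI+K)^{-1}r$ (and similarly $V(b)$, $S(b,a)$). If $S^{(i,j)}=S^{(j,i)}$ for all $i,j$, then $S(a,b)=S(b,a)$, $V(a)=1-c\,(aI+K)^{-1}(I+M)^{-1}r$, and $$1-(p+b)\tilde S(a,b)+(p-a)S(a,b)=\tilde V(a)V(b),\qquad 1-(q+b)\hat S(a,b)+(q-a)S(a,b)=\hat V(a)V(b),$$ $$1-(p+a)\tilde S(a,b)+(p-b)S(a,b)=\tilde V(b)V(a),\qquad 1-(q+a)\hat S(a,b)+(q-b)S(a,b)=\hat V(b)V(a).$$
   Context: For a function $f$ on $\mathbb{Z}^2$, $\tilde f(n,m)=f(n+1,m)$ and $\hat f(n,m)=f(n,m+1)$. $I$ is the $N\times N$ identity matrix. The symmetry $S(a,b)=S(b,a)$ and the identities for $S(a,b),V$ are to be understood for all $a,b$ with $aI+K$, $bI+K$ invertible (the symmetry argument uses the formal expansion $S(a,b)=\sum_{i,j\ge0}(-1)^{i+j}a^{-i-1}b^{-j-1}S^{(i,j)}$). *)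

theory Defs
  imports "HOL-Analysis.Analysis"
begin

definition mpow_nat :: "complex^'n^'n \<Rightarrow> nat \<Rightarrow> complex^'n^'n" where
  "mpow_nat K k = (((**) K) ^^ k) (mat 1)"

definition mpow_int :: "complex^'n^'n \<Rightarrow> int \<Rightarrow> complex^'n^'n" where
  "mpow_int K j = (if 0 \<le> j then mpow_nat K (nat j) else mpow_nat (matrix_inv K) (nat (- j)))"

definition rowcol :: "complex^'n \<Rightarrow> complex^'n \<Rightarrow> complex" where
  "rowcol c v = (\<Sum>k\<in>UNIV. c $ k * v $ k)"

definition outer :: "complex^'n \<Rightarrow> complex^'n \<Rightarrow> complex^'n^'n" where
  "outer r c = (\<chi> i j. r $ i * c $ j)"

definition is_eigenvalue :: "complex^'n^'n \<Rightarrow> complex \<Rightarrow> bool" where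
  "is_eigenvalue K k \<longleftrightarrow> (\<exists>v. v \<noteq> 0 \<and> K *v v = k *s v)"

definition Sij :: "complex^'n \<Rightarrow> complex^'n^'n \<Rightarrow> (int \<Rightarrow> int \<Rightarrow> complex^'n^'n)
    \<Rightarrow> (int \<Rightarrow> int \<Rightarrow> complex^'n) \<Rightarrow> int \<Rightarrow> int \<Rightarrow> int \<Rightarrow> int \<Rightarrow> complex" where
  "Sij c K M r n m i j =
     rowcol c (mpow_int K j *v (matrix_inv (mat 1 + M n m) *v (mpow_int K i *v r n m)))"

definition Sab :: "complex^'n \<Rightarrow> complex^'n^'n \<Rightarrow> (int \<Rightarrow> int \<Rightarrow> complex^'n^'n)
    \<Rightarrow> (int \<Rightarrow> int \<Rightarrow> complex^'n) \<Rightarrow> int \<Rightarrow> int \<Rightarrow> complex \<Rightarrow> complex \<Rightarrow> complex" where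
  "Sab c K M r n m a b =
     rowcol c (matrix_inv (mat b + K) *v (matrix_inv (mat 1 + M n m) *v
        (matrix_inv (mat a + K) *v r n m)))"

definition Va :: "complex^'n \<Rightarrow> complex^'n^'n \<Rightarrow> (int \<Rightarrow> int \<Rightarrow> complex^'n^'n)
    \<Rightarrow> (int \<Rightarrow> int \<Rightarrow> complex^'n) \<Rightarrow> int \<Rightarrow> int \<Rightarrow> complex \<Rightarrow> complex" where
  "Va c K M r n m a =
     1 - rowcol c (matrix_inv (mat 1 + M n m) *v (matrix_inv (mat a + K) *v r n m))"

end

theory Submission
  imports Defs "HOL-Computational_Algebra.Fundamental_Theorem_Algebra"
begin


lemma matrix_add_rdistrib: "((B + C) ** A) = (B ** A) + (C ** A)"
  by (vector matrix_matrix_mult_def sum.distrib[symmetric] field_simps)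

typedef ('n::finite) cm = "UNIV :: (complex^'n^'n) set" by simp

instantiation cm :: (finite) ring_1
begin
definition "0 = Abs_cm 0"
definition "1 = Abs_cm (mat 1)"
definition "A + B = Abs_cm (Rep_cm A + Rep_cm B)"
definition "A - B = Abs_cm (Rep_cm A - Rep_cm B)"
definition "- A = Abs_cm (- Rep_cm A)"
definition "A * B = Abs_cm (Rep_cm A ** Rep_cm B)"
instance
proof
  fix a b c :: "'a cm"
  show "a * b * c = a * (b * c)"
    by (simp add: times_cm_def Abs_cm_inverse matrix_mul_assoc)
  show "(a + b) * c = a * c + b * c"
    by (simp add: times_cm_def plus_cm_def Abs_cm_inverse matrix_add_rdistrib)
  show "a * (b + c) = a * b + a * c"
    by (simp add: times_cm_def plus_cm_def Abs_cm_inverse matrix_add_ldistrib)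
  show "1 * a = a" by (simp add: times_cm_def one_cm_def Abs_cm_inverse Rep_cm_inverse)
  show "a * 1 = a" by (simp add: times_cm_def one_cm_def Abs_cm_inverse Rep_cm_inverse)
  show "a + b + c = a + (b + c)" by (simp add: plus_cm_def Abs_cm_inverse add.assoc)
  show "a + b = b + a" by (simp add: plus_cm_def add.commute)
  show "0 + a = a" by (simp add: plus_cm_def zero_cm_def Abs_cm_inverse Rep_cm_inverse)
  show "- a + a = 0" by (simp add: plus_cm_def zero_cm_def uminus_cm_def Abs_cm_inverse)
  show "a - b = a + - b" by (simp add: plus_cm_def minus_cm_def uminus_cm_def Abs_cm_inverse)
  show "(0::'a cm) \<noteq> 1"
  proof
    assume h: "(0::'a cm) = 1"
    hence "(0::complex^'a^'a) = mat 1" by (simp add: zero_cm_def one_cm_def Abs_cm_inject)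
    moreover have "(mat 1::complex^'a^'a) $ i $ i = 1" for i by (simp add: mat_def)
    ultimately show False by (metis zero_index zero_neq_one)
  qed
qed
end

lemma Rep_cm_ops [simp]:
  "Rep_cm (A + B) = Rep_cm A + Rep_cm B" "Rep_cm (A - B) = Rep_cm A - Rep_cm B"
  "Rep_cm (- A) = - Rep_cm A" "Rep_cm (A * B) = Rep_cm A ** Rep_cm B"
  "Rep_cm 0 = 0" "Rep_cm 1 = mat 1"
  by (simp_all add: plus_cm_def minus_cm_def uminus_cm_def times_cm_def zero_cm_def one_cm_def Abs_cm_inverse)

lemma cm_eq_iff: "A = B \<longleftrightarrow> Rep_cm A = Rep_cm B" by (simp add: Rep_cm_inject)

lemma Rep_cm_Abs [simp]: "Rep_cm (Abs_cm X) = X" by (simp add: Abs_cm_inverse)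

lemma Rep_cm_sum: "finite S \<Longrightarrow> Rep_cm (sum f S) = (\<Sum>x\<in>S. Rep_cm (f x))"
  by (induction S rule: finite_induct) auto

definition sc :: "complex \<Rightarrow> 'n::finite cm" where "sc a = Abs_cm (mat a)"

lemma mat_mult_left: "mat a ** (A::complex^'n^'n) = (\<chi> i j. a * A $ i $ j)"
  by (simp add: vec_eq_iff matrix_matrix_mult_def mat_def if_distrib if_distribR sum.delta' cong: if_cong)
lemma mat_mult_right: "(A::complex^'n^'n) ** mat a = (\<chi> i j. a * A $ i $ j)"
  by (simp add: vec_eq_iff matrix_matrix_mult_def mat_def if_distrib if_distribR sum.delta' mult.commute cong: if_cong)

lemma sc_comm: "sc a * X = X * sc a"
  by (simp add: cm_eq_iff sc_def mat_mult_left mat_mult_right)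
lemma sc_add: "sc (a + b) = sc a + sc b"
  by (simp add: cm_eq_iff sc_def vec_eq_iff mat_def)
lemma sc_diff: "sc (a - b) = sc a - sc b"
  by (simp add: cm_eq_iff sc_def vec_eq_iff mat_def)
lemma sc_minus: "sc (- a) = - sc a"
  by (simp add: cm_eq_iff sc_def vec_eq_iff mat_def)
lemma sc_mult: "sc (a * b) = sc a * sc b"
  by (simp add: cm_eq_iff sc_def mat_mult_left) (simp add: vec_eq_iff mat_def)
lemma sc_1 [simp]: "sc 1 = 1" by (simp add: cm_eq_iff sc_def)
lemma sc_0 [simp]: "sc 0 = 0" by (simp add: cm_eq_iff sc_def)
lemma Rep_sc [simp]: "Rep_cm (sc a) = mat a" by (simp add: sc_def)

lemma sc_comm2: "X * (sc a * Y) = sc a * (X * Y)"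
  by (metis mult.assoc sc_comm)

definition app :: "'n::finite cm \<Rightarrow> complex^'n \<Rightarrow> complex^'n" where
  "app A v = Rep_cm A *v v"

lemma app_simps [simp]:
  "app (A * B) v = app A (app B v)"
  "app (A + B) v = app A v + app B v"
  "app (A - B) v = app A v - app B v"
  "app (- A) v = - app A v"
  "app 1 v = v" "app 0 v = 0"
  "app (sc a) v = a *s v"
  "app A (u + w) = app A u + app A w"
  "app A (u - w) = app A u - app A w"
  "app A (a *s u) = a *s app A u"
  "app A 0 = 0"
  by (simp_all add: app_def matrix_vector_mul_assoc matrix_vector_mult_add_rdistrib
      matrix_vector_mult_diff_rdistrib matrix_vector_right_distrib matrix_vector_mult_diff_distrib)
     (auto simp: vec_eq_iff matrix_vector_mult_def mat_def if_distrib if_distribR sum.delta'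
        sum_distrib_left sum_negf algebra_simps cong: if_cong)



lemma rowcol_simps [simp]:
  "rowcol w (u + v) = rowcol w u + rowcol w v"
  "rowcol w (u - v) = rowcol w u - rowcol w v"
  "rowcol w (a *s u) = a * rowcol w u"
  "rowcol w 0 = 0"
  by (simp_all add: rowcol_def sum.distrib sum_subtractf sum_distrib_left algebra_simps)

lemma rowcol_sum: "rowcol w (sum f S) = (\<Sum>i\<in>S. rowcol w (f i))"
  by (induction S rule: infinite_finite_induct) auto

lemma app_sum: "app A (sum f S) = (\<Sum>i\<in>S. app A (f i))"
  by (induction S rule: infinite_finite_induct) auto

lemma app_sum2: "app (sum F S) v = (\<Sum>i\<in>S. app (F i) v)"
  by (induction S rule: infinite_finite_induct) auto

definition ou :: "complex^'n \<Rightarrow> complex^'n \<Rightarrow> 'n::finite cm" where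
  "ou u w = Abs_cm (\<chi> i j. u$i * w$j)"

definition rapp :: "complex^'n \<Rightarrow> 'n::finite cm \<Rightarrow> complex^'n" where
  "rapp w A = w v* Rep_cm A"

lemma rowcol_app: "rowcol w (app A z) = rowcol (rapp w A) z"
proof -
  have "rowcol w (app A z) = (\<Sum>k\<in>UNIV. \<Sum>j\<in>UNIV. w $ k * Rep_cm A $ k $ j * z $ j)"
    by (simp add: rowcol_def app_def matrix_vector_mult_def sum_distrib_left mult.assoc)
  also have "\<dots> = (\<Sum>j\<in>UNIV. \<Sum>k\<in>UNIV. w $ k * Rep_cm A $ k $ j * z $ j)"
    by (rule sum.swap)
  also have "\<dots> = rowcol (rapp w A) z"
    by (simp add: rowcol_def rapp_def vector_matrix_mult_def sum_distrib_right mult.assoc)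
  finally show ?thesis .
qed

lemma rapp_mult: "rapp w (A * B) = rapp (rapp w A) B"
  by (simp add: rapp_def vector_matrix_mul_assoc)

lemma rapp_one [simp]: "rapp w 1 = w"
  by (simp add: rapp_def)

lemma app_ou: "app (ou u w) z = rowcol w z *s u"
  by (simp add: app_def ou_def rowcol_def vec_eq_iff matrix_vector_mult_def sum_distrib_left mult.assoc mult.commute mult.left_commute)

lemma ou_left: "A * ou u w = ou (app A u) w"
  by (simp add: cm_eq_iff ou_def app_def vec_eq_iff matrix_matrix_mult_def matrix_vector_mult_def sum_distrib_right mult.assoc)

lemma ou_right: "ou u w * A = ou u (rapp w A)"
  by (simp add: cm_eq_iff ou_def rapp_def vec_eq_iff matrix_matrix_mult_def vector_matrix_mult_def sum_distrib_left mult.assoc mult.commute mult.left_commute)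

definition ci :: "'n::finite cm \<Rightarrow> 'n cm" where
  "ci A = Abs_cm (matrix_inv (Rep_cm A))"

lemma ci_props:
  assumes "invertible (Rep_cm A)"
  shows "ci A * A = 1" "A * ci A = 1"
proof -
  have "Rep_cm A ** matrix_inv (Rep_cm A) = mat 1 \<and> matrix_inv (Rep_cm A) ** Rep_cm A = mat 1"
    using assms unfolding invertible_def matrix_inv_def by (rule someI_ex)
  thus "ci A * A = 1" "A * ci A = 1" by (simp_all add: cm_eq_iff ci_def)
qed

lemma ci_unique:
  assumes "invertible (Rep_cm A)" "A * B = 1"
  shows "ci A = B"
proof -
  have "ci A = ci A * (A * B)" using assms by simp
  also have "\<dots> = B" using ci_props(1)[OF assms(1)] by (simp add: mult.assoc[symmetric])
  finally show ?thesis .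
qed

lemma ci_comm:
  assumes "invertible (Rep_cm A)" "A * X = X * A"
  shows "ci A * X = X * ci A"
proof -
  have "ci A * X = ci A * X * (A * ci A)" using ci_props[OF assms(1)] by simp
  also have "\<dots> = ci A * (A * X) * ci A" using assms(2) by (simp add: mult.assoc)
  also have "\<dots> = X * ci A" using ci_props[OF assms(1)] by (simp add: mult.assoc[symmetric])
  finally show ?thesis .
qed

definition mev :: "complex poly \<Rightarrow> 'n::finite cm \<Rightarrow> 'n cm" where
  "mev p K = (\<Sum>i\<le>degree p. sc (coeff p i) * K ^ i)"

lemma mev_bound:
  assumes "degree p < n"
  shows "mev p K = (\<Sum>i<n. sc (coeff p i) * K ^ i)"
  unfolding mev_def
proof (rule sum.mono_neutral_left)
  show "{..degree p} \<subseteq> {..<n}" using assms by auto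
  show "\<forall>i\<in>{..<n} - {..degree p}. sc (coeff p i) * K ^ i = 0"
    by (auto simp: coeff_eq_0)
qed auto

lemma mev_add: fixes p q :: "complex poly" shows "mev (p + q) K = mev p K + mev q K"
proof -
  define n where "n = Suc (max (degree p) (degree q))"
  have "degree (p + q) < n" using degree_add_le_max[of p q] by (simp add: n_def)
  moreover have "degree p < n" "degree q < n" by (auto simp: n_def)
  ultimately show ?thesis
    by (simp add: mev_bound sc_add distrib_right sum.distrib)
qed

lemma mev_smult: "mev (smult a p) K = sc a * mev p K"
proof -
  have "degree (smult a p) < Suc (degree p)" using degree_smult_le[of a p] by simp
  thus ?thesis
    by (simp add: mev_bound[of _ "Suc (degree p)"] sum_distrib_left sc_mult mult.assoc del: sum.lessThan_Suc)
qed

lemma mev_pCons0: "mev (pCons 0 p) K = K * mev p K"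
proof -
  have d: "degree (pCons 0 p) < Suc (Suc (degree p))"
    by (cases "p = 0") auto
  have "mev (pCons 0 p) K = (\<Sum>i<Suc (Suc (degree p)). sc (coeff (pCons 0 p) i) * K ^ i)"
    by (rule mev_bound[OF d])
  also have "\<dots> = (\<Sum>i<Suc (degree p). sc (coeff p i) * K ^ Suc i)"
    by (subst sum.lessThan_Suc_shift) simp
  also have "\<dots> = K * mev p K"
    by (simp add: mev_bound[of p "Suc (degree p)"] sum_distrib_left sc_comm2 mult.assoc del: sum.lessThan_Suc)
  finally show ?thesis .
qed

lemma mev_const [simp]: "mev [:a:] K = sc a"
  by (simp add: mev_def)

lemma mev_lin: "mev ([:c, 1:] * q) K = (sc c + K) * mev q K"
proof -
  have "[:c, 1:] * q = smult c q + pCons 0 q"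
    by (simp only: mult_pCons_left smult_1_left mult_zero_left pCons_0_0 add_0_right)
  thus ?thesis by (simp add: mev_add mev_smult mev_pCons0 distrib_right)
qed

lemma mev_comm: "mev p K * K = K * mev p K"
proof -
  have t: "sc c * K ^ i * K = K * (sc c * K ^ i)" for c i
    by (metis mult.assoc power_commutes sc_comm)
  show ?thesis unfolding mev_def sum_distrib_left sum_distrib_right
    by (rule sum.cong) (simp_all only: t)
qed

lemma neg_comm_pow:
  fixes D K :: "'n::finite cm"
  assumes "D * K = - (K * D)"
  shows "D * K ^ i = (- K) ^ i * D"
proof (induction i)
  case (Suc i)
  have "D * K ^ Suc i = D * K * K ^ i" by (simp only: mult.assoc power_Suc)
  also have "\<dots> = - (K * D) * K ^ i" using assms by (simp only:)
  also have "\<dots> = - K * (D * K ^ i)" by (simp only: minus_mult_left mult.assoc)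
  also have "\<dots> = - K * ((- K) ^ i * D)" using Suc by (simp only:)
  also have "\<dots> = (- K) ^ Suc i * D" by (simp only: mult.assoc power_Suc)
  finally show ?case .
qed simp

lemma mev_neg_comm:
  assumes "D * K = - (K * D)"
  shows "D * mev p K = mev p (- K) * D"
proof -
  have t: "D * (sc c * K ^ i) = sc c * (- K) ^ i * D" for c i
    by (simp only: sc_comm2 neg_comm_pow[OF assms] mult.assoc)
  show ?thesis unfolding mev_def sum_distrib_left sum_distrib_right
    by (rule sum.cong) (simp_all only: t)
qed



lemma scaleR_Rep: "r *\<^sub>R (A::complex^'n^'n) = Rep_cm (sc (of_real r)) ** A"
  by (simp add: mat_mult_left vec_eq_iff) (simp add: scaleR_conv_of_real)

lemma annih: "\<exists>p. p \<noteq> (0::complex poly) \<and> mev p (K::'n::finite cm) = 0"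
proof -
  define m where "m = DIM(complex^'n^'n)"
  define P where "P i = Rep_cm (K^i)" for i
  have "\<exists>cs. (\<exists>k\<le>m. cs k \<noteq> 0) \<and> (\<Sum>k\<le>m. sc (cs k) * K^k) = 0"
  proof (cases "inj_on P {..m}")
    case True
    let ?S = "P ` {..m}"
    have cardS: "card ?S = Suc m" using True by (simp add: card_image)
    have "\<not> independent ?S" using independent_bound[of ?S] cardS by (auto simp: m_def)
    then obtain u where u: "\<exists>v\<in>?S. u v \<noteq> 0" "(\<Sum>v\<in>?S. u v *\<^sub>R v) = 0"
      using real_vector.dependent_finite[of ?S] by auto
    have "(\<Sum>v\<in>?S. u v *\<^sub>R v) = (\<Sum>k\<le>m. u (P k) *\<^sub>R P k)"
      by (rule sum.reindex_cong[OF True]) auto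
    hence s0: "(\<Sum>k\<le>m. u (P k) *\<^sub>R P k) = 0" using u(2) by simp
    define cs where "cs k = complex_of_real (u (P k))" for k
    have "Rep_cm (\<Sum>k\<le>m. sc (cs k) * K^k) = (\<Sum>k\<le>m. u (P k) *\<^sub>R P k)"
      by (simp add: Rep_cm_sum cs_def P_def scaleR_Rep)
    hence "(\<Sum>k\<le>m. sc (cs k) * K^k) = 0" using s0 by (simp add: cm_eq_iff)
    moreover from u(1) obtain k where "k \<le> m" "cs k \<noteq> 0" by (auto simp: cs_def)
    ultimately show ?thesis by blast
  next
    case False
    then obtain i j where ij: "i \<le> m" "j \<le> m" "i \<noteq> j" "P i = P j"
      unfolding inj_on_def by auto
    define cs where "cs k = (if k = j then 1 else if k = i then -1 else (0::complex))" for k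
    have t: "sc (cs k) * K^k = (if k = j then K^k else 0) - (if k = i then K^k else 0)" for k
      using ij(3) by (auto simp: cs_def sc_minus)
    have "(\<Sum>k\<le>m. sc (cs k) * K^k) = K^j - K^i"
      using ij by (simp add: t sum_subtractf)
    also have "K^j = K^i" using ij(4) by (simp add: P_def Rep_cm_inject)
    finally have "(\<Sum>k\<le>m. sc (cs k) * K^k) = 0" by simp
    moreover have "cs j \<noteq> 0" by (simp add: cs_def)
    ultimately show ?thesis using ij by blast
  qed
  then obtain cs where cs: "\<exists>k\<le>m. cs k \<noteq> 0" "(\<Sum>k\<le>m. sc (cs k) * K^k) = 0" by blast
  define p where "p = (\<Sum>k\<le>m. monom (cs k) k)"
  have cp: "coeff p k = (if k \<le> m then cs k else 0)" for k
    by (simp add: p_def coeff_sum coeff_monom)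
  have "p \<noteq> 0" using cs(1) cp by (metis coeff_0)
  moreover have "degree p < Suc m"
    using cp by (metis degree_le le_imp_less_Suc not_less)
  hence "mev p K = (\<Sum>k<Suc m. sc (coeff p k) * K^k)" by (rule mev_bound)
  hence "mev p K = 0" using cs(2) by (simp add: cp lessThan_Suc_atMost del: sum.lessThan_Suc)
  ultimately show ?thesis by blast
qed

lemma mat_vec: "mat a *v (v::complex^'n) = a *s v"
  by (simp add: vec_eq_iff matrix_vector_mult_def mat_def if_distrib if_distribR sum.delta' cong: if_cong)

lemma row_prod: "(A ** B) $ i = A $ i v* (B::complex^'n^'n)"
  by (simp add: vec_eq_iff matrix_matrix_mult_def vector_matrix_mult_def mult.commute)

lemma vm_diff: "(w::complex^'n) v* (A - B) = w v* A - w v* B"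
  by (simp add: vec_eq_iff vector_matrix_mult_def sum_subtractf algebra_simps)

lemma vm_mat: "(w::complex^'n) v* mat x = x *s w"
  by (simp add: vec_eq_iff vector_matrix_mult_def mat_def if_distrib if_distribR sum.delta' mult.commute cong: if_cong)

lemma eig_pair:
  fixes E K :: "'n::finite cm"
  assumes KE: "(K + sc x) * E = 0" and EK: "E * K + K * E = 0" and nz: "E \<noteq> 0"
  shows "is_eigenvalue (Rep_cm K) (- x)" "is_eigenvalue (Rep_cm K) x"
proof -
  have KE2: "K * E = - (sc x * E)" using KE by (simp add: distrib_right eq_neg_iff_add_eq_0)
  have EK2: "E * K = sc x * E" using EK KE2 by (simp add: add_eq_0_iff2)
  have KE': "Rep_cm K ** Rep_cm E = - (mat x ** Rep_cm E)"
    using arg_cong[OF KE2, of Rep_cm] by simp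
  have EK': "Rep_cm E ** Rep_cm K = mat x ** Rep_cm E"
    using arg_cong[OF EK2, of Rep_cm] by simp
  from nz obtain i j where ij: "Rep_cm E $ i $ j \<noteq> 0"
    by (metis (mono_tags) Rep_cm_ops(5) cm_eq_iff vec_eq_iff zero_index)
  define v where "v = (\<chi> k. Rep_cm E $ k $ j)"
  have "v \<noteq> 0" using ij by (metis v_def vec_lambda_beta zero_index)
  moreover have "Rep_cm K *v v = (- x) *s v"
  proof -
    have "(Rep_cm K ** Rep_cm E) $ k $ j = - (x * Rep_cm E $ k $ j)" for k
      using KE' by (simp add: mat_mult_left)
    thus ?thesis
      by (simp add: vec_eq_iff v_def matrix_vector_mult_def matrix_matrix_mult_def)
  qed
  ultimately show "is_eigenvalue (Rep_cm K) (- x)" unfolding is_eigenvalue_def by blast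
  define w where "w = Rep_cm E $ i"
  have wnz: "w \<noteq> 0" using ij by (metis w_def zero_index)
  have "w v* Rep_cm K = x *s w"
    using arg_cong[OF EK', of "\<lambda>A. A $ i"] by (simp add: row_prod w_def mat_mult_left vec_eq_iff)
  hence "transpose (Rep_cm K - mat x) *v w = 0"
    by (simp add: vm_diff vm_mat)
  hence "\<not> invertible (transpose (Rep_cm K - mat x))"
    using wnz inj_matrix_vector_mult by (metis injD matrix_vector_mult_0_right)
  hence "\<not> invertible (Rep_cm K - mat x)" by (simp add: invertible_det_nz)
  hence "\<not> (\<forall>y. (Rep_cm K - mat x) *v y = 0 \<longrightarrow> y = 0)"
    using invertible_left_inverse matrix_left_invertible_ker by blast
  then obtain y where "y \<noteq> 0" "(Rep_cm K - mat x) *v y = 0" by blast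
  hence "y \<noteq> 0" "Rep_cm K *v y = x *s y"
    by (simp_all add: matrix_vector_mult_diff_rdistrib mat_vec)
  thus "is_eigenvalue (Rep_cm K) x" unfolding is_eigenvalue_def by blast
qed



lemma mev_one [simp]: "mev 1 K = 1"
  by (simp add: mev_def)

lemma sylvester:
  fixes D K :: "'n::finite cm"
  assumes eig: "\<And>k l. is_eigenvalue (Rep_cm K) k \<Longrightarrow> is_eigenvalue (Rep_cm K) l \<Longrightarrow> k + l \<noteq> 0"
    and DK: "D * K + K * D = 0"
  shows "D = 0"
proof -
  have peel: "\<And>D. D * K + K * D = 0 \<Longrightarrow> mev (\<Prod>x\<in>#A. [:-x, 1:]) (- K) * D = 0 \<Longrightarrow> D = 0" for A
  proof (induction A)
    case empty
    then show ?case by simp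
  next
    case (add x A D)
    define Q where "Q = mev (\<Prod>x\<in>#A. [:-x, 1:]) (- K)"
    have pe: "(\<Prod>x\<in>#add_mset x A. [:-x,1:]) = [:-x,1:] * (\<Prod>x\<in>#A. [:-x,1:])" by simp
    have "mev (\<Prod>x\<in>#add_mset x A. [:-x,1:]) (-K) = (sc (-x) + - K) * Q"
      by (simp only: pe mev_lin Q_def)
    hence "(sc (-x) + - K) * Q * D = 0" using add.prems(2) by simp
    hence "- ((K + sc x) * (Q * D)) = 0" by (simp add: mult.assoc sc_minus algebra_simps)
    hence h1: "(K + sc x) * (Q * D) = 0" by simp
    have QK: "Q * K = K * Q"
      using mev_comm[of "\<Prod>x\<in>#A. [:-x, 1:]" "- K"] by (simp add: Q_def)
    have DK': "D * K = - (K * D)" using add.prems(1) by (simp add: eq_neg_iff_add_eq_0)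
    have "Q * D * K = - (K * (Q * D))"
      by (simp add: mult.assoc DK') (simp add: mult.assoc[symmetric] QK)
    hence h2: "Q * D * K + K * (Q * D) = 0" by simp
    have "Q * D = 0"
    proof (rule ccontr)
      assume "Q * D \<noteq> 0"
      from eig_pair[OF h1 h2 this] eig[of "- x" x] show False by simp
    qed
    thus "D = 0" using add.IH add.prems(1) Q_def by blast
  qed
  obtain p where p: "p \<noteq> 0" "mev p K = 0" using annih by blast
  have DK': "D * K = - (K * D)" using DK by (simp add: eq_neg_iff_add_eq_0)
  define Q where "Q = mev (\<Prod>x\<in>#proots p. [:-x, 1:]) (- K)"
  define l where "l = lead_coeff p"
  have l: "l \<noteq> 0" using p(1) by (simp add: l_def)
  have "mev p (-K) * D = 0" using mev_neg_comm[OF DK', of p] p(2) by simp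
  moreover have "mev p (-K) = sc l * Q"
  proof -
    have "mev (smult l (\<Prod>x\<in>#proots p. [:-x, 1:])) (-K) = mev p (-K)"
      using complex_poly_decompose_multiset[of p] by (simp add: l_def)
    thus ?thesis by (simp add: mev_smult Q_def)
  qed
  ultimately have "sc l * (Q * D) = 0" by (simp add: mult.assoc)
  hence "sc (1/l) * (sc l * (Q * D)) = 0" by simp
  hence "Q * D = 0" using l by (simp add: mult.assoc[symmetric] sc_mult[symmetric])
  thus "D = 0" using peel DK Q_def by blast
qed

lemma inv_poly:
  fixes K :: "'n::finite cm"
  assumes inv: "invertible (Rep_cm (sc a + K))"
  shows "\<exists>h. ci (sc a + K) = mev h K"
proof -
  have main: "p \<noteq> 0 \<Longrightarrow> mev p K = 0 \<Longrightarrow> \<exists>h. ci (sc a + K) = mev h K" for p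
  proof (induction "degree p" arbitrary: p rule: less_induct)
    case less
    define s where "s = synthetic_div p (-a)"
    define f where "f = poly p (-a)"
    have dec: "[:a, 1:] * s + [:f:] = p" using synthetic_div_correct'[of "-a" p] by (simp add: s_def f_def)
    have "mev p K = (sc a + K) * mev s K + sc f"
      by (subst dec[symmetric]) (simp only: mev_add mev_lin mev_const)
    hence ev: "(sc a + K) * mev s K = - sc f" using less.prems(2) by (simp add: eq_neg_iff_add_eq_0)
    show ?case
    proof (cases "f = 0")
      case False
      have "(sc a + K) * (sc (-1/f) * mev s K) = sc (-1/f) * ((sc a + K) * mev s K)"
        by (simp add: sc_comm2)
      also have "\<dots> = - sc (-1/f * f)" by (simp only: ev mult_minus_right sc_mult[symmetric])
      also have "\<dots> = 1"
      proof -
        have "-1/f * f = -1" using False by simp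
        thus ?thesis by (simp only: sc_minus sc_1 minus_minus)
      qed
      finally have "ci (sc a + K) = sc (-1/f) * mev s K" by (rule ci_unique[OF inv])
      thus ?thesis by (metis mev_smult)
    next
      case True
      hence "(sc a + K) * mev s K = 0" using ev by simp
      hence "ci (sc a + K) * ((sc a + K) * mev s K) = 0" by simp
      hence ms: "mev s K = 0" using ci_props(1)[OF inv] by (simp add: mult.assoc[symmetric])
      have sn: "s \<noteq> 0" using dec True less.prems(1) by auto
      have "degree p = degree ([:a, 1:] * s)" using dec True by simp
      also have "\<dots> = Suc (degree s)" using sn by (simp add: degree_mult_eq del: mult_pCons_left)
      finally have "degree s < degree p" by simp
      thus ?thesis using less.hyps sn ms by blast
    qed
  qed
  obtain p where "p \<noteq> 0" "mev p K = 0" using annih by blast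
  thus ?thesis using main by blast
qed

definition T :: "complex^'n \<Rightarrow> 'n::finite cm \<Rightarrow> 'n cm \<Rightarrow> 'n cm \<Rightarrow> complex^'n \<Rightarrow> complex" where
  "T c X A B v = rowcol c (app B (app X (app A v)))"

lemma app_mev: "degree p < n \<Longrightarrow> app (mev p K) v = (\<Sum>i<n. coeff p i *s app (K^i) v)"
  by (simp add: mev_bound app_sum2 del: sum.lessThan_Suc)

lemma T_expand:
  assumes "degree f < n" "degree g < n"
  shows "T c X (mev f K) (mev g K) v = (\<Sum>j<n. \<Sum>i<n. coeff g j * coeff f i * T c X (K^i) (K^j) v)"
  apply (simp add: T_def app_mev[OF assms(1)] app_mev[OF assms(2)] app_sum rowcol_sum
      sum_distrib_left mult.assoc del: sum.lessThan_Suc)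
  apply (subst sum.swap)
  apply (simp add: mult.left_commute)
  done

lemma bil_sym:
  assumes "\<And>i j. T c X (K^i) (K^j) v = T c X (K^j) (K^i) v"
  shows "T c X (mev f K) (mev g K) v = T c X (mev g K) (mev f K) v"
proof -
  define n where "n = Suc (max (degree f) (degree g))"
  have d: "degree f < n" "degree g < n" by (auto simp: n_def)
  have "T c X (mev f K) (mev g K) v = (\<Sum>j<n. \<Sum>i<n. coeff g j * coeff f i * T c X (K^i) (K^j) v)"
    by (rule T_expand[OF d])
  also have "\<dots> = (\<Sum>i<n. \<Sum>j<n. coeff g j * coeff f i * T c X (K^i) (K^j) v)"
    by (rule sum.swap)
  also have "\<dots> = (\<Sum>i<n. \<Sum>j<n. coeff f i * coeff g j * T c X (K^j) (K^i) v)"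
    by (simp add: assms mult.commute)
  also have "\<dots> = T c X (mev g K) (mev f K) v"
    by (rule T_expand[OF d(2) d(1), symmetric])
  finally show ?thesis .
qed



lemma rowcol_rapp [simp]: "rowcol (rapp w A) z = rowcol w (app A z)"
  by (simp add: rowcol_app)

lemma rels:
  fixes K M M' :: "'n::finite cm"
  assumes eig: "\<And>k l. is_eigenvalue (Rep_cm K) k \<Longrightarrow> is_eigenvalue (Rep_cm K) l \<Longrightarrow> k + l \<noteq> 0"
    and rr: "app (sc p - K) r' = app (sc p + K) r"
    and MK: "M * K + K * M = ou r c" and MK': "M' * K + K * M' = ou r' c"
    and i1: "invertible (Rep_cm (1 + M))" and i2: "invertible (Rep_cm (1 + M'))"
  shows "ci (1 + M) * (sc p - K) - (sc p - K) * ci (1 + M') = ou (app (ci (1 + M)) r) (rapp c (ci (1 + M')))"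
    and "(sc p + K) * ci (1 + M) - ci (1 + M') * (sc p + K) = ou (app (ci (1 + M')) r') (rapp c (ci (1 + M)))"
proof -
  define P where "P = sc p - K"
  define Q where "Q = sc p + K"
  define Om where "Om = ou r c"
  define Oq where "Oq = ou r' c"
  define X where "X = ci (1 + M)"
  define X' where "X' = ci (1 + M')"
  have PK: "K * P = P * K" "K * (P * Y) = P * (K * Y)" for Y
    by (simp_all add: P_def algebra_simps sc_comm2 sc_comm[of p K])
  have QK: "K * Q = Q * K" "K * (Q * Y) = Q * (K * Y)" for Y
    by (simp_all add: Q_def algebra_simps sc_comm2 sc_comm[of p K])
  have rr': "app P r' = app Q r" using rr by (simp add: P_def Q_def)
  have X1: "X * (1 + M) = 1" "(1 + M') * X' = 1"
    using ci_props[OF i1] ci_props[OF i2] by (simp_all add: X_def X'_def)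
  have X2: "X' * (1 + M') = 1" "(1 + M) * X = 1"
    using ci_props[OF i1] ci_props[OF i2] by (simp_all add: X_def X'_def)
  define D where "D = P * M' - M * P - Om"
  have "D * K + K * D = P * (M' * K + K * M') - (M * K + K * M) * P - (Om * K + K * Om)"
    by (simp add: D_def algebra_simps PK)
  also have "\<dots> = P * Oq - Om * P - (Om * K + K * Om)" by (simp add: MK MK' Om_def Oq_def)
  also have "P * Oq = Q * Om" by (simp add: Om_def Oq_def ou_left rr')
  also have "Q * Om - Om * P - (Om * K + K * Om) = 0"
    by (simp add: P_def Q_def algebra_simps sc_comm[of p Om])
  finally have "D = 0" using sylvester[OF eig] by blast
  hence e1: "P * (1 + M') - (1 + M) * P = Om" by (simp add: D_def algebra_simps)
  have "X * P - P * X' = X * P * ((1 + M') * X') - (X * (1 + M)) * P * X'"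
    by (simp add: X1)
  also have "\<dots> = X * (P * (1 + M') - (1 + M) * P) * X'"
    by (simp add: algebra_simps)
  also have "\<dots> = ou (app X r) (rapp c X')"
    by (simp add: e1 Om_def ou_left ou_right)
  finally show "ci (1 + M) * (sc p - K) - (sc p - K) * ci (1 + M') = ou (app (ci (1 + M)) r) (rapp c (ci (1 + M')))"
    by (simp add: X_def X'_def P_def)
  define D2 where "D2 = M' * Q - Q * M - Oq"
  have "D2 * K + K * D2 = (M' * K + K * M') * Q - Q * (M * K + K * M) - (Oq * K + K * Oq)"
    by (simp add: D2_def algebra_simps QK)
  also have "\<dots> = Oq * Q - Q * Om - (Oq * K + K * Oq)" by (simp add: MK MK' Om_def Oq_def)
  also have "\<dots> = P * Oq - Q * Om"
    by (simp add: P_def Q_def algebra_simps sc_comm[of p Oq])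
  also have "P * Oq = Q * Om" by (simp add: Om_def Oq_def ou_left rr')
  finally have "D2 = 0" using sylvester[OF eig] by simp
  hence e2: "(1 + M') * Q - Q * (1 + M) = Oq" by (simp add: D2_def algebra_simps)
  have "Q * X - X' * Q = (X' * (1 + M')) * Q * X - X' * Q * ((1 + M) * X)"
    by (simp add: X2)
  also have "\<dots> = X' * ((1 + M') * Q - Q * (1 + M)) * X"
    by (simp add: algebra_simps)
  also have "\<dots> = ou (app X' r') (rapp c X)"
    by (simp add: e2 Oq_def ou_left ou_right)
  finally show "(sc p + K) * ci (1 + M) - ci (1 + M') * (sc p + K) = ou (app (ci (1 + M')) r') (rapp c (ci (1 + M)))"
    by (simp add: X_def X'_def Q_def)
qed



lemma part1:
  fixes K X X' A B :: "'n::finite cm"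
  assumes R1: "X * (sc p - K) - (sc p - K) * X' = ou (app X r) (rapp c X')"
    and R2: "(sc p + K) * X - X' * (sc p + K) = ou (app X' r') (rapp c X)"
    and rr: "app (sc p - K) r' = app (sc p + K) r"
    and AK: "A * K = K * A"
  shows "p * T c X' A B r' - T c X' A (B * K) r'
          = p * T c X A B r + T c X (A * K) B r - T c X' A 1 r' * T c X 1 B r"
    and "p * T c X A B r + T c X A (B * K) r
          = p * T c X' A B r' - T c X' (A * K) B r' + T c X A 1 r * T c X' 1 B r'"
proof -
  have PA: "(sc p - K) * A = A * (sc p - K)" "(sc p + K) * A = A * (sc p + K)"
    by (simp_all add: algebra_simps AK sc_comm)
  have a1: "app (sc p - K) (app A r') = p *s app A r + app A (app K r)"
  proof -
    have "app (sc p - K) (app A r') = app A (app (sc p - K) r')"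
      using arg_cong[OF PA(1), of "\<lambda>Z. app Z r'"] by simp
    also have "\<dots> = p *s app A r + app A (app K r)" by (simp only: rr) simp
    finally show ?thesis .
  qed
  have a2: "app (sc p + K) (app A r) = p *s app A r' - app A (app K r')"
  proof -
    have "app (sc p + K) (app A r) = app A (app (sc p + K) r)"
      using arg_cong[OF PA(2), of "\<lambda>Z. app Z r"] by simp
    also have "\<dots> = p *s app A r' - app A (app K r')" by (simp only: rr[symmetric]) simp
    finally show ?thesis .
  qed
  have E1: "(sc p - K) * X' = X * (sc p - K) - ou (app X r) (rapp c X')"
    using R1 by (simp add: algebra_simps)
  have E2: "(sc p + K) * X = X' * (sc p + K) + ou (app X' r') (rapp c X)"
    using R2 by (simp add: algebra_simps)
  have "p * T c X' A B r' - T c X' A (B * K) r' = rowcol c (app B (app ((sc p - K) * X') (app A r')))"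
    by (simp add: T_def)
  also have "\<dots> = rowcol c (app B (app X (p *s app A r + app A (app K r)) - rowcol (rapp c X') (app A r') *s app X r))"
    by (simp only: E1 app_simps(3)[of "X * (sc p - K)" "ou (app X r) (rapp c X')"] app_simps(1) app_ou a1)
  also have "\<dots> = p * T c X A B r + T c X (A * K) B r - T c X' A 1 r' * T c X 1 B r"
    by (simp add: T_def algebra_simps)
  finally show "p * T c X' A B r' - T c X' A (B * K) r'
          = p * T c X A B r + T c X (A * K) B r - T c X' A 1 r' * T c X 1 B r" .
  have "p * T c X A B r + T c X A (B * K) r = rowcol c (app B (app ((sc p + K) * X) (app A r)))"
    by (simp add: T_def)
  also have "\<dots> = rowcol c (app B (app X' (p *s app A r' - app A (app K r')) + rowcol (rapp c X) (app A r) *s app X' r'))"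
    by (simp only: E2 app_simps(2)[of "X' * (sc p + K)" "ou (app X' r') (rapp c X)"] app_simps(1) app_ou a2)
  also have "\<dots> = p * T c X' A B r' - T c X' (A * K) B r' + T c X A 1 r * T c X' 1 B r'"
    by (simp add: T_def algebra_simps)
  finally show "p * T c X A B r + T c X A (B * K) r
          = p * T c X' A B r' - T c X' (A * K) B r' + T c X A 1 r * T c X' 1 B r'" .
qed

lemma sc_K_comm: "(sc x + K) * (sc y + K) = (sc y + K) * (sc x + (K :: 'n::finite cm))"
proof -
  have "sc x * sc y = sc y * (sc x :: 'n cm)" by (simp add: sc_mult[symmetric] mult.commute)
  thus ?thesis by (simp add: distrib_left distrib_right sc_comm[of _ K] add_ac)
qed

lemma part2:
  fixes K X X' :: "'n::finite cm"
  assumes R2: "(sc p + K) * X - X' * (sc p + K) = ou (app X' r') (rapp c X)"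
    and rr: "app (sc p - K) r' = app (sc p + K) r"
    and ia: "invertible (Rep_cm (sc a + K))" and ib: "invertible (Rep_cm (sc b + K))"
    and symX: "T c X (ci (sc a + K)) (ci (sc b + K)) r = T c X (ci (sc b + K)) (ci (sc a + K)) r"
    and symX': "T c X' (ci (sc a + K)) (ci (sc b + K)) r' = T c X' (ci (sc b + K)) (ci (sc a + K)) r'"
    and VX': "T c X' (ci (sc a + K)) 1 r' = T c X' 1 (ci (sc a + K)) r'"
  shows "1 - (p + b) * T c X' (ci (sc a + K)) (ci (sc b + K)) r' + (p - a) * T c X (ci (sc a + K)) (ci (sc b + K)) r
     = (1 - T c X' (ci (sc a + K)) 1 r') * (1 - T c X (ci (sc b + K)) 1 r)"
proof -
  define Am where "Am = ci (sc a + K)"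
  define Bm where "Bm = ci (sc b + K)"
  have prod: "T c X' 1 Am r' * T c X Bm 1 r
      = rowcol c (app Am (app ((sc p + K) * X - X' * (sc p + K)) (app Bm r)))"
    unfolding R2 by (simp add: T_def app_ou)
  have AmQ: "Am * (sc p + K) = sc (p - a) * Am + 1"
  proof -
    have "Am * (sc p + K) = Am * sc (p - a) + Am * (sc a + K)"
      by (simp add: sc_diff algebra_simps)
    also have "\<dots> = sc (p - a) * Am + 1"
      using ci_props(1)[OF ia] by (simp add: Am_def sc_comm)
    finally show ?thesis .
  qed
  have QBm: "(sc p + K) * Bm = Bm * (sc p + K)"
    using ci_comm[OF ib sc_K_comm[of b K p]] by (simp add: Bm_def)
  have BmP: "Bm * (sc p - K) = sc (p + b) * Bm - 1"
  proof -
    have "Bm * (sc p - K) = Bm * sc (p + b) - Bm * (sc b + K)"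
      by (simp add: sc_add algebra_simps)
    also have "\<dots> = sc (p + b) * Bm - 1"
      using ci_props(1)[OF ib] by (simp add: Bm_def sc_comm)
    finally show ?thesis .
  qed
  have t1: "rowcol c (app Am (app ((sc p + K) * X) (app Bm r))) = (p - a) * T c X Bm Am r + T c X Bm 1 r"
  proof -
    have "rowcol c (app Am (app ((sc p + K) * X) (app Bm r))) = rowcol c (app (Am * (sc p + K)) (app X (app Bm r)))"
      by simp
    also have "\<dots> = (p - a) * T c X Bm Am r + T c X Bm 1 r"
      by (simp add: AmQ T_def left_diff_distrib)
    finally show ?thesis .
  qed
  have t2: "rowcol c (app Am (app (X' * (sc p + K)) (app Bm r))) = (p + b) * T c X' Bm Am r' - T c X' 1 Am r'"
  proof -
    have "app (sc p + K) (app Bm r) = app ((sc p + K) * Bm) r" by simp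
    also have "\<dots> = app Bm (app (sc p - K) r')" by (simp only: QBm app_simps(1) rr)
    also have "\<dots> = app (Bm * (sc p - K)) r'" by simp
    also have "\<dots> = (p + b) *s app Bm r' - r'" by (simp add: BmP)
    finally have eq: "app (sc p + K) (app Bm r) = (p + b) *s app Bm r' - r'" .
    have "rowcol c (app Am (app (X' * (sc p + K)) (app Bm r))) = rowcol c (app Am (app X' (app (sc p + K) (app Bm r))))"
      by (simp only: app_simps(1))
    also have "\<dots> = rowcol c (app Am (app X' ((p + b) *s app Bm r' - r')))" by (simp only: eq)
    also have "\<dots> = (p + b) * T c X' Bm Am r' - T c X' 1 Am r'" by (simp add: T_def algebra_simps)
    finally show ?thesis .
  qed
  have prod': "T c X' 1 Am r' * T c X Bm 1 r
      = (p - a) * T c X Bm Am r + T c X Bm 1 r - ((p + b) * T c X' Bm Am r' - T c X' 1 Am r')"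
    using prod t1 t2 by (simp del: app_simps(1) add: app_simps(3))
  show ?thesis
    using prod' symX symX' VX' unfolding Am_def[symmetric] Bm_def[symmetric]
    by (simp add: algebra_simps)
qed



definition Xof :: "(int \<Rightarrow> int \<Rightarrow> complex^'n^'n) \<Rightarrow> int \<Rightarrow> int \<Rightarrow> 'n::finite cm" where
  "Xof M n m = ci (1 + Abs_cm (M n m))"

definition Pwof :: "complex^'n^'n \<Rightarrow> int \<Rightarrow> 'n::finite cm" where
  "Pwof K i = Abs_cm (mpow_int K i)"

lemma Abs_cm_mult: "Abs_cm (A ** B) = Abs_cm A * Abs_cm B"
  by (simp add: times_cm_def)

lemma Abs_mpow_nat: "Abs_cm (mpow_nat A k) = Abs_cm A ^ k"
  by (induction k) (simp_all add: mpow_nat_def Abs_cm_mult one_cm_def)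

lemma ci_Abs: "ci (Abs_cm A) = Abs_cm (matrix_inv A)"
  by (simp add: ci_def)

lemma Pwof_cases: "Pwof K i = (if 0 \<le> i then Abs_cm K ^ nat i else ci (Abs_cm K) ^ nat (- i))"
  by (simp add: Pwof_def mpow_int_def Abs_mpow_nat ci_Abs)

lemma Pwof_nat: "Pwof K (int k) = Abs_cm K ^ k"
  by (simp add: Pwof_cases)

lemma Pwof_0: "Pwof K 0 = 1"
  by (simp add: Pwof_cases)

lemma Pwof_comm:
  assumes "invertible K"
  shows "Pwof K i * Abs_cm K = Abs_cm K * Pwof K i"
proof -
  have "ci (Abs_cm K) * Abs_cm K = Abs_cm K * ci (Abs_cm K)"
    using ci_props[of "Abs_cm K"] assms by simp
  thus ?thesis by (simp add: Pwof_cases power_commutes power_commuting_commutes)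
qed

lemma Pwof_succ:
  assumes "invertible K"
  shows "Pwof K (i + 1) = Pwof K i * Abs_cm K"
proof -
  have ck: "ci (Abs_cm K) * Abs_cm K = 1" using ci_props[of "Abs_cm K"] assms by simp
  show ?thesis
  proof (cases "0 \<le> i")
    case True
    hence "nat (i + 1) = Suc (nat i)" by simp
    thus ?thesis using True by (simp add: Pwof_cases power_Suc2 power_commutes)
  next
    case False
    show ?thesis
    proof (cases "i = -1")
      case True
      thus ?thesis using ck by (simp add: Pwof_cases)
    next
      case False
      define k where "k = nat (- (i + 1))"
      from False \<open>\<not> 0 \<le> i\<close> have e: "nat (- i) = Suc k" "\<not> 0 \<le> i + 1" by (auto simp: k_def)
      have "ci (Abs_cm K) ^ Suc k * Abs_cm K = ci (Abs_cm K) ^ k"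
        using ck by (simp only: power_Suc2 mult.assoc mult_1_right)
      moreover have "Pwof K (i + 1) = ci (Abs_cm K) ^ k" using e by (simp add: Pwof_cases k_def)
      moreover have "Pwof K i = ci (Abs_cm K) ^ Suc k" using e \<open>\<not> 0 \<le> i\<close> by (simp only: Pwof_cases if_False)
      ultimately show ?thesis by simp
    qed
  qed
qed

lemma Sij_T: "Sij c K M r n m i j = T c (Xof M n m) (Pwof K i) (Pwof K j) (r n m)"
  by (simp add: Sij_def T_def app_def ci_def Xof_def Pwof_def)

lemma Sab_T: "Sab c K M r n m a b = T c (Xof M n m) (ci (sc a + Abs_cm K)) (ci (sc b + Abs_cm K)) (r n m)"
  by (simp add: Sab_def T_def app_def ci_def Xof_def)

lemma Va_T: "Va c K M r n m a = 1 - T c (Xof M n m) (ci (sc a + Abs_cm K)) 1 (r n m)"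
  by (simp add: Va_def T_def app_def ci_def Xof_def)

lemma Va_alt: "rowcol c (matrix_inv (mat a + K) *v (matrix_inv (mat 1 + M n m) *v r n m))
   = T c (Xof M n m) 1 (ci (sc a + Abs_cm K)) (r n m)"
  by (simp add: T_def app_def ci_def Xof_def)

lemma ou_Abs: "Abs_cm (outer u w) = ou u w"
  by (simp add: ou_def outer_def)

theorem theorem1:
  fixes p q a b :: complex
    and K :: "complex^'n^'n"
    and c :: "complex^'n"
    and r :: "int \<Rightarrow> int \<Rightarrow> complex^'n"
    and M :: "int \<Rightarrow> int \<Rightarrow> complex^'n^'n"
  assumes r_n: "\<And>n m. (mat p - K) *v r (n + 1) m = (mat p + K) *v r n m"
    and r_m: "\<And>n m. (mat q - K) *v r n (m + 1) = (mat q + K) *v r n m"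
    and M_eq: "\<And>n m. M n m ** K + K ** M n m = outer (r n m) c"
    and M_inv: "\<And>n m. invertible (mat 1 + M n m)"
    and s_inv: "\<And>s. s \<in> {0, p, q, a, b} \<Longrightarrow> invertible (mat s + K) \<and> invertible (mat s - K)"
    and eig: "\<And>k l. is_eigenvalue K k \<Longrightarrow> is_eigenvalue K l \<Longrightarrow> k + l \<noteq> 0"
  shows
   "(\<forall>n m i j.
      p * Sij c K M r (n + 1) m i j - Sij c K M r (n + 1) m i (j + 1)
        = p * Sij c K M r n m i j + Sij c K M r n m (i + 1) j
          - Sij c K M r (n + 1) m i 0 * Sij c K M r n m 0 j
    \<and> p * Sij c K M r n m i j + Sij c K M r n m i (j + 1)
        = p * Sij c K M r (n + 1) m i j - Sij c K M r (n + 1) m (i + 1) j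
          + Sij c K M r n m i 0 * Sij c K M r (n + 1) m 0 j
    \<and> q * Sij c K M r n (m + 1) i j - Sij c K M r n (m + 1) i (j + 1)
        = q * Sij c K M r n m i j + Sij c K M r n m (i + 1) j
          - Sij c K M r n (m + 1) i 0 * Sij c K M r n m 0 j
    \<and> q * Sij c K M r n m i j + Sij c K M r n m i (j + 1)
        = q * Sij c K M r n (m + 1) i j - Sij c K M r n (m + 1) (i + 1) j
          + Sij c K M r n m i 0 * Sij c K M r n (m + 1) 0 j)
    \<and> ((\<forall>n m i j. Sij c K M r n m i j = Sij c K M r n m j i) \<longrightarrow>
       (\<forall>n m.
          Sab c K M r n m a b = Sab c K M r n m b a
        \<and> Va c K M r n m a
            = 1 - rowcol c (matrix_inv (mat a + K) *v (matrix_inv (mat 1 + M n m) *v r n m))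
        \<and> 1 - (p + b) * Sab c K M r (n + 1) m a b + (p - a) * Sab c K M r n m a b
            = Va c K M r (n + 1) m a * Va c K M r n m b
        \<and> 1 - (q + b) * Sab c K M r n (m + 1) a b + (q - a) * Sab c K M r n m a b
            = Va c K M r n (m + 1) a * Va c K M r n m b
        \<and> 1 - (p + a) * Sab c K M r (n + 1) m a b + (p - b) * Sab c K M r n m a b
            = Va c K M r (n + 1) m b * Va c K M r n m a
        \<and> 1 - (q + a) * Sab c K M r n (m + 1) a b + (q - b) * Sab c K M r n m a b
            = Va c K M r n (m + 1) b * Va c K M r n m a))"
proof -
  define Kc where "Kc = Abs_cm K"
  have RK [simp]: "Rep_cm Kc = K" by (simp add: Kc_def)
  have Kinv: "invertible K" using s_inv[of 0] by simp
  have eig': "\<And>k l. is_eigenvalue (Rep_cm Kc) k \<Longrightarrow> is_eigenvalue (Rep_cm Kc) l \<Longrightarrow> k + l \<noteq> 0"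
    using eig by simp
  have MK: "Abs_cm (M n m) * Kc + Kc * Abs_cm (M n m) = ou (r n m) c" for n m
    using M_eq[of n m] by (simp add: cm_eq_iff ou_def outer_def)
  have MI: "invertible (Rep_cm (1 + Abs_cm (M n m)))" for n m
    using M_inv[of n m] by simp
  have rrp: "app (sc p - Kc) (r (n + 1) m) = app (sc p + Kc) (r n m)" for n m
    using r_n[of n m] by (simp add: app_def)
  have rrq: "app (sc q - Kc) (r n (m + 1)) = app (sc q + Kc) (r n m)" for n m
    using r_m[of n m] by (simp add: app_def)
  note RP = rels[OF eig' rrp MK MK MI MI, folded Xof_def]
  note RQ = rels[OF eig' rrq MK MK MI MI, folded Xof_def]
  have PK: "Pwof K i * Kc = Kc * Pwof K i" for i using Pwof_comm[OF Kinv] by (simp add: Kc_def)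
  have PS: "Pwof K (i + 1) = Pwof K i * Kc" for i using Pwof_succ[OF Kinv] by (simp add: Kc_def)
  show ?thesis
  proof (intro conjI allI impI)
    fix n m i j
    show "p * Sij c K M r (n + 1) m i j - Sij c K M r (n + 1) m i (j + 1)
        = p * Sij c K M r n m i j + Sij c K M r n m (i + 1) j
          - Sij c K M r (n + 1) m i 0 * Sij c K M r n m 0 j"
      unfolding Sij_T PS Pwof_0 by (rule part1(1)[OF RP(1) RP(2) rrp PK])
    show "p * Sij c K M r n m i j + Sij c K M r n m i (j + 1)
        = p * Sij c K M r (n + 1) m i j - Sij c K M r (n + 1) m (i + 1) j
          + Sij c K M r n m i 0 * Sij c K M r (n + 1) m 0 j"
      unfolding Sij_T PS Pwof_0 by (rule part1(2)[OF RP(1) RP(2) rrp PK])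
    show "q * Sij c K M r n (m + 1) i j - Sij c K M r n (m + 1) i (j + 1)
        = q * Sij c K M r n m i j + Sij c K M r n m (i + 1) j
          - Sij c K M r n (m + 1) i 0 * Sij c K M r n m 0 j"
      unfolding Sij_T PS Pwof_0 by (rule part1(1)[OF RQ(1) RQ(2) rrq PK])
    show "q * Sij c K M r n m i j + Sij c K M r n m i (j + 1)
        = q * Sij c K M r n (m + 1) i j - Sij c K M r n (m + 1) (i + 1) j
          + Sij c K M r n m i 0 * Sij c K M r n (m + 1) 0 j"
      unfolding Sij_T PS Pwof_0 by (rule part1(2)[OF RQ(1) RQ(2) rrq PK])
  next
    assume H: "\<forall>n m i j. Sij c K M r n m i j = Sij c K M r n m j i"
    have ia: "invertible (Rep_cm (sc a + Kc))" using s_inv[of a] by simp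
    have ib: "invertible (Rep_cm (sc b + Kc))" using s_inv[of b] by simp
    obtain ha where ha: "ci (sc a + Kc) = mev ha Kc" using inv_poly[OF ia] by blast
    obtain hb where hb: "ci (sc b + Kc) = mev hb Kc" using inv_poly[OF ib] by blast
    have symp: "T c (Xof M n m) (mev f Kc) (mev g Kc) (r n m) = T c (Xof M n m) (mev g Kc) (mev f Kc) (r n m)"
      for n m f g
    proof (rule bil_sym)
      fix i j :: nat
      show "T c (Xof M n m) (Kc ^ i) (Kc ^ j) (r n m) = T c (Xof M n m) (Kc ^ j) (Kc ^ i) (r n m)"
        using H[rule_format, of n m "int i" "int j"] by (simp add: Sij_T Pwof_nat Kc_def)
    qed
    have sAB: "T c (Xof M n m) (ci (sc a + Kc)) (ci (sc b + Kc)) (r n m)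
             = T c (Xof M n m) (ci (sc b + Kc)) (ci (sc a + Kc)) (r n m)" for n m
      unfolding ha hb by (rule symp)
    have sA1: "T c (Xof M n m) (ci (sc a + Kc)) 1 (r n m) = T c (Xof M n m) 1 (ci (sc a + Kc)) (r n m)" for n m
      using symp[of n m ha 1] by (simp add: ha)
    have sB1: "T c (Xof M n m) (ci (sc b + Kc)) 1 (r n m) = T c (Xof M n m) 1 (ci (sc b + Kc)) (r n m)" for n m
      using symp[of n m hb 1] by (simp add: hb)
    fix n m
    show "Sab c K M r n m a b = Sab c K M r n m b a"
      unfolding Sab_T Kc_def[symmetric] by (rule sAB)
    show "Va c K M r n m a
            = 1 - rowcol c (matrix_inv (mat a + K) *v (matrix_inv (mat 1 + M n m) *v r n m))"
      unfolding Va_T Va_alt Kc_def[symmetric] using sA1 by simp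
    show "1 - (p + b) * Sab c K M r (n + 1) m a b + (p - a) * Sab c K M r n m a b
            = Va c K M r (n + 1) m a * Va c K M r n m b"
      unfolding Sab_T Va_T Kc_def[symmetric]
      by (rule part2[OF RP(2) rrp ia ib sAB sAB sA1])
    show "1 - (q + b) * Sab c K M r n (m + 1) a b + (q - a) * Sab c K M r n m a b
            = Va c K M r n (m + 1) a * Va c K M r n m b"
      unfolding Sab_T Va_T Kc_def[symmetric]
      by (rule part2[OF RQ(2) rrq ia ib sAB sAB sA1])
    show "1 - (p + a) * Sab c K M r (n + 1) m a b + (p - b) * Sab c K M r n m a b
            = Va c K M r (n + 1) m b * Va c K M r n m a"
      unfolding Sab_T Va_T Kc_def[symmetric] sAB
      by (rule part2[OF RP(2) rrp ib ia sAB[symmetric] sAB[symmetric] sB1])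
    show "1 - (q + a) * Sab c K M r n (m + 1) a b + (q - b) * Sab c K M r n m a b
            = Va c K M r n (m + 1) b * Va c K M r n m a"
      unfolding Sab_T Va_T Kc_def[symmetric] sAB
      by (rule part2[OF RQ(2) rrq ib ia sAB[symmetric] sAB[symmetric] sB1])
  qed
qed

end
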